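(* Let $X$ be a Tychonoff space and $\beta X$ its Čech–Stone compactification. (a) If $|\beta X\setminus X|=1$, then $\mathsf{EC}(X,\mathbb{R})$ holds. (b) If $\beta X\setminus X$ is at most countable and $X$ is locally compact, then $\mathsf{L}(X,\mathbb{R})$ holds.
   Context: All spaces are Hausdorff and maps continuous. For a non-Lindelöf space $X$ and a space $Y$: $\mathsf{EC}(X,Y)$ means that for every continuous $f:X\to Y$ there is a Lindelöf $Z\subset X$ with $f(X\setminus Z)$ a singleton; $\mathsf{L}(X,Y)$ means that for every continuous $f:X\to Y$ there is a Lindelöf $Z\subset X$ with $f(Z)=f(X)$. (For Lindelöf $X$ these properties are regarded as trivially true.) *)

theory Defs
  imports "HOL-Analysis.Analysis"
begin

definition EC_prop :: "'a topology \<Rightarrow> 'b topology \<Rightarrow> bool" where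
  "EC_prop X Y \<longleftrightarrow> (\<not> Lindelof_space X \<longrightarrow>
     (\<forall>f. continuous_map X Y f \<longrightarrow>
        (\<exists>Z. Z \<subseteq> topspace X \<and> Lindelof_space (subtopology X Z) \<and>
             (\<exists>c. f ` (topspace X - Z) = {c}))))"

definition L_prop :: "'a topology \<Rightarrow> 'b topology \<Rightarrow> bool" where
  "L_prop X Y \<longleftrightarrow> (\<not> Lindelof_space X \<longrightarrow>
     (\<forall>f. continuous_map X Y f \<longrightarrow>
        (\<exists>Z. Z \<subseteq> topspace X \<and> Lindelof_space (subtopology X Z) \<and>
             f ` Z = f ` topspace X)))"

definition stone_cech_compactification :: "'a topology \<Rightarrow> 'b topology \<Rightarrow> ('a \<Rightarrow> 'b) \<Rightarrow> bool" where
  "stone_cech_compactification X K e \<longleftrightarrow>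
     compact_space K \<and> Hausdorff_space K \<and> embedding_map X K e \<and>
     K closure_of (e ` topspace X) = topspace K \<and>
     (\<forall>f. continuous_map X (top_of_set {0..1::real}) f \<longrightarrow>
        (\<exists>g. continuous_map K (top_of_set {0..1::real}) g \<and>
             (\<forall>x\<in>topspace X. g (e x) = f x)))"

end

theory Submission imports Defs begin

lemma Lindelof_real_sub: "Lindelof_space (subtopology euclideanreal A)"
  unfolding Lindelof_space_subtopology
proof (intro allI impI)
  fix U :: "real set set" assume "(\<forall>U\<in>U. openin euclideanreal U) \<and> topspace euclideanreal \<inter> A \<subseteq> \<Union> U"
  then have o: "\<And>S. S \<in> U \<Longrightarrow> open S" and c: "A \<subseteq> \<Union>U" by auto
  obtain V where "V \<subseteq> U" "countable V" "\<Union>V = \<Union>U" using Lindelof[of U] o by metis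
  then show "\<exists>V. countable V \<and> V \<subseteq> U \<and> topspace euclideanreal \<inter> A \<subseteq> \<Union> V"
    using c by (intro exI[of _ V]) simp
qed

lemma Lindelof_preimage_real:
  assumes K: "compact_space K" and g: "continuous_map K euclideanreal g"
  shows "Lindelof_space (subtopology K {y \<in> topspace K. g y \<in> A})"
proof -
  have "proper_map K euclideanreal g"
    by (rule continuous_imp_proper_map[OF K _ g]) (simp add: Hausdorff_imp_kc_space)
  then have "proper_map (subtopology K {y \<in> topspace K. g y \<in> A}) (subtopology euclideanreal A) g"
    by (rule proper_map_restriction) simp
  moreover have "Lindelof_space (subtopology euclideanreal A)"
    by (rule Lindelof_real_sub)
  ultimately show ?thesis by (rule Lindelof_space_proper_map_preimage)
qed

lemma Lindelof_homeo:
  assumes "homeomorphic_map X Y f" "Lindelof_space Y"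
  shows "Lindelof_space X"
proof -
  obtain g where hm: "homeomorphic_maps X Y f g" using assms(1) homeomorphic_map_maps by blast
  then have gc: "continuous_map Y X g" and fc: "continuous_map X Y f"
    and gf: "\<And>x. x \<in> topspace X \<Longrightarrow> g (f x) = x"
    unfolding homeomorphic_maps_def by auto
  have "g ` topspace Y \<subseteq> topspace X" using gc by (rule continuous_map_image_subset_topspace)
  moreover have "topspace X \<subseteq> g ` topspace Y"
  proof
    fix x assume x: "x \<in> topspace X"
    then have "f x \<in> topspace Y" using fc continuous_map_image_subset_topspace by blast
    then show "x \<in> g ` topspace Y" using gf[OF x] by (metis image_eqI)
  qed
  ultimately have "g ` topspace Y = topspace X" by (rule subset_antisym)
  then show ?thesis using Lindelof_space_continuous_map_image[OF assms(2) gc] by blast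
qed

lemma embedding_Lindelof:
  assumes e: "embedding_map X K e" and Z: "Z \<subseteq> topspace X"
    and L: "Lindelof_space (subtopology K (e ` Z))"
  shows "Lindelof_space (subtopology X Z)"
proof -
  have h: "homeomorphic_map X (subtopology K (e ` topspace X)) e" using e by (simp add: embedding_map_def)
  have "e ` topspace X = topspace K \<inter> e ` topspace X"
    using homeomorphic_imp_surjective_map[OF h] unfolding topspace_subtopology .
  then have sub: "e ` topspace X \<subseteq> topspace K" by blast
  have Z1: "topspace X \<inter> Z = Z" using Z by blast
  have Z2: "e ` Z \<subseteq> topspace K \<inter> e ` topspace X" using Z sub by blast
  have Z3: "e ` (topspace X \<inter> Z) = topspace (subtopology K (e ` topspace X)) \<inter> e ` Z"
    unfolding topspace_subtopology Z1 using Z2 by blast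
  have hm: "homeomorphic_map (subtopology X Z) (subtopology (subtopology K (e ` topspace X)) (e ` Z)) e"
    by (rule homeomorphic_map_subtopologies[OF h Z3])
  have Z4: "e ` topspace X \<inter> e ` Z = e ` Z" using Z by blast
  have eq: "subtopology (subtopology K (e ` topspace X)) (e ` Z) = subtopology K (e ` Z)"
    unfolding subtopology_subtopology Z4 ..
  have hm2: "homeomorphic_map (subtopology X Z) (subtopology K (e ` Z)) e"
    using hm unfolding eq .
  show ?thesis by (rule Lindelof_homeo[OF hm2 L])
qed

theorem theorem2p6:
  fixes X :: "'a topology" and K :: "'b topology" and e :: "'a \<Rightarrow> 'b"
  assumes "completely_regular_space X" and "Hausdorff_space X"
    and "stone_cech_compactification X K e"
  shows "((\<exists>p. topspace K - e ` topspace X = {p}) \<longrightarrow> EC_prop X euclideanreal)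
    \<and> (countable (topspace K - e ` topspace X) \<and> locally_compact_space X
           \<longrightarrow> L_prop X euclideanreal)"
proof -
  have K: "compact_space K" and emb: "embedding_map X K e"
    and ext: "\<And>f. continuous_map X (top_of_set {0..1::real}) f \<Longrightarrow>
        (\<exists>g. continuous_map K (top_of_set {0..1::real}) g \<and>
             (\<forall>x\<in>topspace X. g (e x) = f x))"
    using assms(3) unfolding stone_cech_compactification_def by blast+
  have sub: "e ` topspace X \<subseteq> topspace K"
    using emb unfolding embedding_map_def by (metis homeomorphic_imp_surjective_map inf_le1 topspace_subtopology)
  have main: "\<exists>g. continuous_map K euclideanreal g \<and> (\<forall>x\<in>topspace X. \<forall>y\<in>topspace X.
       g (e x) = g (e y) \<longrightarrow> f x = f y)" if fc: "continuous_map X euclideanreal f" for f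
  proof -
    define h where "h x = arctan (f x) / pi + 1/2" for x
    have c1: "continuous_on UNIV (\<lambda>y. arctan y / pi + 1/2)"
      by (intro continuous_intros) auto
    have c2: "continuous_map euclideanreal euclideanreal (\<lambda>y. arctan y / pi + 1/2)"
      using c1 by (simp add: continuous_map_iff_continuous)
    have hc: "continuous_map X euclideanreal h"
      using continuous_map_compose[OF fc c2] by (simp add: h_def[abs_def] o_def)
    have hb: "h x \<in> {0..1}" for x
    proof -
      have "-(pi/2) < arctan (f x)" "arctan (f x) < pi/2" using arctan_bounded by auto
      then show ?thesis unfolding h_def by (auto simp: field_simps)
    qed
    have "continuous_map X (top_of_set {0..1::real}) h"
      using hc hb by (auto simp: continuous_map_in_subtopology)
    then obtain g where g: "continuous_map K (top_of_set {0..1::real}) g"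
      and ge: "\<forall>x\<in>topspace X. g (e x) = h x" using ext by blast
    have gR: "continuous_map K euclideanreal g"
      using g by (simp add: continuous_map_in_subtopology)
    show ?thesis
    proof (intro exI conjI ballI impI, rule gR)
      fix x y assume xy: "x \<in> topspace X" "y \<in> topspace X" "g (e x) = g (e y)"
      then have "h x = h y" using ge by auto
      then have "arctan (f x) = arctan (f y)" unfolding h_def by (auto simp: field_simps)
      then show "f x = f y" by (simp add: arctan_eq_iff)
    qed
  qed
  have key: "Lindelof_space (subtopology X {x\<in>topspace X. g (e x) \<in> A})"
    if gR: "continuous_map K euclideanreal g"
      and A: "\<And>y. y \<in> topspace K \<Longrightarrow> y \<notin> e ` topspace X \<Longrightarrow> g y \<notin> A" for g A
  proof (rule embedding_Lindelof[OF emb])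
    show "{x\<in>topspace X. g (e x) \<in> A} \<subseteq> topspace X" by auto
    have "e ` {x\<in>topspace X. g (e x) \<in> A} = {y \<in> topspace K. g y \<in> A}"
    proof
      show "e ` {x\<in>topspace X. g (e x) \<in> A} \<subseteq> {y \<in> topspace K. g y \<in> A}" using sub by auto
      show "{y \<in> topspace K. g y \<in> A} \<subseteq> e ` {x\<in>topspace X. g (e x) \<in> A}"
      proof
        fix y assume y: "y \<in> {y \<in> topspace K. g y \<in> A}"
        then have "y \<in> e ` topspace X" using A by blast
        then obtain x where x: "x \<in> topspace X" "y = e x" by blast
        then show "y \<in> e ` {x\<in>topspace X. g (e x) \<in> A}" using y by blast
      qed
    qed
    then show "Lindelof_space (subtopology K (e ` {x\<in>topspace X. g (e x) \<in> A}))"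
      using Lindelof_preimage_real[OF K gR] by simp
  qed
  show ?thesis
  proof (intro conjI impI)
    assume "\<exists>p. topspace K - e ` topspace X = {p}"
    then obtain p where p: "topspace K - e ` topspace X = {p}" by blast
    show "EC_prop X euclideanreal"
      unfolding EC_prop_def
    proof (intro impI allI)
      fix f assume nL: "\<not> Lindelof_space X" and fc: "continuous_map X euclideanreal f"
      obtain g where gR: "continuous_map K euclideanreal g" and gi: "\<forall>x\<in>topspace X. \<forall>y\<in>topspace X.
       g (e x) = g (e y) \<longrightarrow> f x = f y" using main[OF fc] by blast
      define Z where "Z = {x\<in>topspace X. g (e x) \<in> - {g p}}"
      have LZ: "Lindelof_space (subtopology X Z)"
        unfolding Z_def by (rule key[OF gR]) (use p in auto)
      have "Z \<noteq> topspace X" using LZ nL by auto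
      then obtain x0 where x0: "x0 \<in> topspace X" "x0 \<notin> Z" unfolding Z_def by blast
      have "f ` (topspace X - Z) = {f x0}"
      proof
        show "f ` (topspace X - Z) \<subseteq> {f x0}"
        proof
          fix v assume "v \<in> f ` (topspace X - Z)"
          then obtain x where x: "x \<in> topspace X" "x \<notin> Z" "v = f x" by blast
          have "g (e x) = g (e x0)" using x x0 unfolding Z_def by simp
          then have "f x = f x0" using gi x(1) x0(1) by blast
          then show "v \<in> {f x0}" using x by simp
        qed
        show "{f x0} \<subseteq> f ` (topspace X - Z)" using x0 by auto
      qed
      then show "\<exists>Z. Z \<subseteq> topspace X \<and> Lindelof_space (subtopology X Z) \<and> (\<exists>c. f ` (topspace X - Z) = {c})"
      proof -
        have "Z \<subseteq> topspace X" unfolding Z_def by blast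
        then show ?thesis using LZ \<open>f ` (topspace X - Z) = {f x0}\<close> by blast
      qed
    qed
  next
    assume "countable (topspace K - e ` topspace X) \<and> locally_compact_space X"
    then have cR: "countable (topspace K - e ` topspace X)" by blast
    show "L_prop X euclideanreal"
      unfolding L_prop_def
    proof (intro impI allI)
      fix f assume fc: "continuous_map X euclideanreal f"
      obtain g where gR: "continuous_map K euclideanreal g" and gi: "\<forall>x\<in>topspace X. \<forall>y\<in>topspace X.
       g (e x) = g (e y) \<longrightarrow> f x = f y" using main[OF fc] by blast
      define C where "C = g ` (topspace K - e ` topspace X)"
      have cC: "countable C" unfolding C_def using cR by simp
      define Z1 where "Z1 = {x\<in>topspace X. g (e x) \<in> - C}"
      define s where "s t = (SOME x. x \<in> topspace X \<and> g (e x) = t)" for t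
      define Z2 where "Z2 = s ` (C \<inter> (\<lambda>x. g (e x)) ` topspace X)"
      have L1: "Lindelof_space (subtopology X Z1)"
        unfolding Z1_def by (rule key[OF gR]) (auto simp: C_def)
      have s: "s t \<in> topspace X \<and> g (e (s t)) = t" if "t \<in> (\<lambda>x. g (e x)) ` topspace X" for t
        unfolding s_def by (rule someI_ex) (use that in auto)
      have Z2s: "Z2 \<subseteq> topspace X" unfolding Z2_def using s by auto
      have "countable Z2" unfolding Z2_def using cC by auto
      then have L2: "Lindelof_space (subtopology X Z2)"
        by (intro countable_imp_Lindelof_space) auto
      have LZ: "Lindelof_space (subtopology X (\<Union>{Z1, Z2}))"
        by (rule Lindelof_space_Union) (use L1 L2 in auto)
      have "f ` (Z1 \<union> Z2) = f ` topspace X"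
      proof
        show "f ` (Z1 \<union> Z2) \<subseteq> f ` topspace X" using Z2s unfolding Z1_def by auto
        show "f ` topspace X \<subseteq> f ` (Z1 \<union> Z2)"
        proof
          fix v assume "v \<in> f ` topspace X"
          then obtain x where x: "x \<in> topspace X" "v = f x" by blast
          show "v \<in> f ` (Z1 \<union> Z2)"
          proof (cases "g (e x) \<in> C")
            case False
            then have "x \<in> Z1" using x unfolding Z1_def by auto
            then show ?thesis using x by auto
          next
            case True
            let ?t = "g (e x)"
            have t: "?t \<in> (\<lambda>x. g (e x)) ` topspace X" using x by auto
            have "s ?t \<in> Z2" unfolding Z2_def using True t by auto
            moreover have "f (s ?t) = f x"
            proof -
              have "s ?t \<in> topspace X" "g (e (s ?t)) = g (e x)" using s[OF t] by auto
              then show ?thesis using gi x(1) by blast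
            qed
            ultimately show ?thesis using x by (metis UnI2 image_eqI)
          qed
        qed
      qed
      then show "\<exists>Z. Z \<subseteq> topspace X \<and> Lindelof_space (subtopology X Z) \<and> f ` Z = f ` topspace X"
      proof -
        have "Z1 \<union> Z2 \<subseteq> topspace X" using Z2s unfolding Z1_def by blast
        moreover have "Lindelof_space (subtopology X (Z1 \<union> Z2))" using LZ by simp
        ultimately show ?thesis using \<open>f ` (Z1 \<union> Z2) = f ` topspace X\<close> by blast
      qed
    qed
  qed
qed

end
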